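(* Let $I,J\in\mathcal I$. Then there is a reconfiguration sequence between $I$ and $J$ if and only if $I$ and $J$ are $\vartriangleleft$-equivalent.
   Context: Let $(a_i)_{i=1,\dots,n}$ be a sequence of distinct integers between $1$ and $n$, and set $a_0=0$; write $A=(a_i)_{i=0,1,\dots,n}$. A set $I\subseteq\{0\}\cup[n]$ is feasible if $a_i<a_j$ for all $i,j\in I$ with $i<j$; $\mathcal I$ denotes the family of feasible sets of maximum cardinality. A reconfiguration sequence between $I$ and $J$ is a sequence of feasible sets $I_0=I,I_1,\dots,I_\ell=J$ such that for each $1\le i\le\ell$, $I_i=(I_{i-1}\cup\{j\})\setminus\{k\}$ for some $j\notin I_{i-1}$, $k\in I_{i-1}$. Patience sorting: start with empty piles $P_0,\dots,P_n$; for $i=0,1,\dots,n$ in order, put $a_i$ on top of the pile $P_j$ with smallest index $j$ such that $P_j$ is empty or the top element of $P_j$ is greater than $a_i$. Let $P_0,\dots,P_k$ be the resulting nonempty piles. Say $a_u$ is placed below $a_v$ on a pile if both lie on the same pile and $a_u$ was put there before $a_v$. For $I,J\in\mathcal I$, write $I\vartriangleleft J$ if $I\setminus J=\{u\}$ and $J\setminus I=\{v\}$ for some $u,v$ such that $a_u$ is placed strictly below $a_v$ on pile $P_i$ for some $1\le i\le k$. For $I\in\mathcal I$, $\mathcal M(I)\subseteq\mathcal I$ is the smallest family containing $I$ such that whenever $J\in\mathcal M(I)$ and $J'\vartriangleleft J$ then $J'\in\mathcal M(I)$. A set is $\vartriangleleft$-minimal if there is no $J\in\mathcal I$ with $J\vartriangleleft$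 it; each $\mathcal M(I)$ contains exactly one $\vartriangleleft$-minimal set. Two sets $I,J\in\mathcal I$ are $\vartriangleleft$-equivalent if the $\vartriangleleft$-minimal set in $\mathcal M(I)$ equals the $\vartriangleleft$-minimal set in $\mathcal M(J)$. *)

theory Defs
  imports Main
begin

text \<open>The sequence A = (a_0,...,a_n) is a function a :: nat => nat, only its values on {0..n} matter.
  Indices range over {0..n}.\<close>

definition feasible :: "(nat \<Rightarrow> nat) \<Rightarrow> nat \<Rightarrow> nat set \<Rightarrow> bool" where
  "feasible a n I \<longleftrightarrow> I \<subseteq> {0..n} \<and> (\<forall>i\<in>I. \<forall>j\<in>I. i < j \<longrightarrow> a i < a j)"

definition maxfeas :: "(nat \<Rightarrow> nat) \<Rightarrow> nat \<Rightarrow> nat set set" where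
  "maxfeas a n = {I. feasible a n I \<and> (\<forall>J. feasible a n J \<longrightarrow> card J \<le> card I)}"

definition reconf_seq :: "(nat \<Rightarrow> nat) \<Rightarrow> nat \<Rightarrow> nat set \<Rightarrow> nat set \<Rightarrow> bool" where
  "reconf_seq a n I J \<longleftrightarrow> (\<exists>L. L \<noteq> [] \<and> hd L = I \<and> last L = J \<and>
      (\<forall>X\<in>set L. feasible a n X) \<and>
      (\<forall>i. Suc i < length L \<longrightarrow>
         (\<exists>j k. j \<notin> L ! i \<and> k \<in> L ! i \<and> L ! Suc i = (L ! i \<union> {j}) - {k})))"

text \<open>Piles are lists of indices (top of pile = head of list); the list of
  piles contains exactly the nonempty piles P_0, P_1, ... in order, so "the smallest j with
  P_j empty" corresponds to appending a new pile at the end.\<close>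
fun ps_insert :: "(nat \<Rightarrow> nat) \<Rightarrow> nat \<Rightarrow> nat list list \<Rightarrow> nat list list" where
  "ps_insert a i [] = [[i]]"
| "ps_insert a i (p # ps) = (if a i < a (hd p) then (i # p) # ps else p # ps_insert a i ps)"

definition patience :: "(nat \<Rightarrow> nat) \<Rightarrow> nat \<Rightarrow> nat list list" where
  "patience a n = foldl (\<lambda>P i. ps_insert a i P) [] [0..<Suc n]"

text \<open>a_u is placed strictly below a_v on pile P_p for some 1 <= p <= k: both lie on the same
  pile P_p and a_u was put there before a_v (elements are processed in index order).\<close>
definition placed_below :: "(nat \<Rightarrow> nat) \<Rightarrow> nat \<Rightarrow> nat \<Rightarrow> nat \<Rightarrow> bool" where
  "placed_below a n u v \<longleftrightarrow> (\<exists>p. 1 \<le> p \<and> p < length (patience a n) \<and>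
      u \<in> set (patience a n ! p) \<and> v \<in> set (patience a n ! p) \<and> u < v)"

definition tri :: "(nat \<Rightarrow> nat) \<Rightarrow> nat \<Rightarrow> nat set \<Rightarrow> nat set \<Rightarrow> bool" where
  "tri a n I J \<longleftrightarrow> I \<in> maxfeas a n \<and> J \<in> maxfeas a n \<and>
     (\<exists>u v. I - J = {u} \<and> J - I = {v} \<and> placed_below a n u v)"

inductive_set Mfam :: "(nat \<Rightarrow> nat) \<Rightarrow> nat \<Rightarrow> nat set \<Rightarrow> nat set set"
  for a n I where
  base: "I \<in> Mfam a n I"
| step: "J \<in> Mfam a n I \<Longrightarrow> tri a n J' J \<Longrightarrow> J' \<in> Mfam a n I"

definition tri_minimal :: "(nat \<Rightarrow> nat) \<Rightarrow> nat \<Rightarrow> nat set \<Rightarrow> bool" where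
  "tri_minimal a n I \<longleftrightarrow> I \<in> maxfeas a n \<and> \<not> (\<exists>J\<in>maxfeas a n. tri a n J I)"

definition min_of :: "(nat \<Rightarrow> nat) \<Rightarrow> nat \<Rightarrow> nat set \<Rightarrow> nat set" where
  "min_of a n I = (THE K. K \<in> Mfam a n I \<and> tri_minimal a n K)"

definition tri_equiv :: "(nat \<Rightarrow> nat) \<Rightarrow> nat \<Rightarrow> nat set \<Rightarrow> nat set \<Rightarrow> bool" where
  "tri_equiv a n I J \<longleftrightarrow> min_of a n I = min_of a n J"

end

theory Submission
  imports Defs
begin


definition rk :: "(nat \<Rightarrow> nat) \<Rightarrow> nat \<Rightarrow> nat" where
  "rk a x = Max (card ` {S. feasible a x S \<and> x \<in> S})"

lemma rk_fin: "finite {S. feasible a x S \<and> x \<in> S}"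
  by (rule finite_subset[of _ "Pow {0..x}"]) (auto simp: feasible_def)

lemma rk_ge: "feasible a x S \<Longrightarrow> x \<in> S \<Longrightarrow> card S \<le> rk a x"
  unfolding rk_def using rk_fin by (intro Max_ge) auto

lemma rk_ex: "\<exists>S. feasible a x S \<and> x \<in> S \<and> card S = rk a x"
proof -
  have "{x} \<in> {S. feasible a x S \<and> x \<in> S}" by (auto simp: feasible_def)
  hence "rk a x \<in> card ` {S. feasible a x S \<and> x \<in> S}"
    unfolding rk_def using rk_fin by (intro Max_in) auto
  thus ?thesis by auto
qed

lemma rk_pos: "1 \<le> rk a x"
  using rk_ge[of a x "{x}"] by (auto simp: feasible_def)

lemma feas_fin: "feasible a n S \<Longrightarrow> finite S"
  by (auto simp: feasible_def intro: finite_subset)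

lemma rk_step: assumes "j < i" "a j < a i" shows "rk a j < rk a i"
proof -
  obtain S where S: "feasible a j S" "j \<in> S" "card S = rk a j" using rk_ex by blast
  have sub: "S \<subseteq> {0..j}" using S by (auto simp: feasible_def)
  have "feasible a i (insert i S)"
    unfolding feasible_def
  proof (intro conjI ballI impI)
    show "insert i S \<subseteq> {0..i}" using sub assms by auto
  next
    fix x y assume xy: "x \<in> insert i S" "y \<in> insert i S" "x < y"
    have lt: "s \<in> S \<Longrightarrow> a s < a i" for s
    proof (cases "s = j")
      case False
      assume s: "s \<in> S"
      hence "s < j" using sub False by fastforce
      hence "a s < a j" using S(1) S(2) s unfolding feasible_def by blast
      thus ?thesis using assms by simp
    qed (use assms in simp)
    show "a x < a y"
    proof (cases "y = i")
      case True
      hence "x \<in> S" using xy by auto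
      thus ?thesis using lt True by simp
    next
      case False
      hence y: "y \<in> S" using xy by auto
      hence "y \<le> j" using sub by auto
      hence "x \<noteq> i" using xy assms by auto
      hence "x \<in> S" using xy by auto
      thus ?thesis using y xy S(1) unfolding feasible_def by blast
    qed
  qed
  moreover have "i \<notin> S" using sub assms by auto
  ultimately have "card (insert i S) \<le> rk a i" "card (insert i S) = Suc (card S)"
    using rk_ge[of a i "insert i S"] feas_fin[OF S(1)] by auto
  thus ?thesis using S by simp
qed

lemma rk_pred: assumes "2 \<le> rk a i" shows "\<exists>j<i. a j < a i \<and> rk a i \<le> Suc (rk a j)"
proof -
  obtain S where S: "feasible a i S" "i \<in> S" "card S = rk a i" using rk_ex by blast
  have fin: "finite S" using feas_fin[OF S(1)] .
  define S' where "S' = S - {i}"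
  have cS': "card S' = rk a i - 1" using S fin by (simp add: S'_def)
  hence ne: "S' \<noteq> {}" using assms by auto
  have finS': "finite S'" using fin by (simp add: S'_def)
  define j where "j = Max S'"
  have jS: "j \<in> S'" using ne finS' by (simp add: j_def)
  have jmax: "s \<in> S' \<Longrightarrow> s \<le> j" for s using finS' by (simp add: j_def)
  have ji: "j < i" using jS S(1) unfolding S'_def feasible_def by fastforce
  have aji: "a j < a i" using jS ji S unfolding S'_def feasible_def by blast
  have "S' \<subseteq> {0..j}" using jmax by auto
  hence "feasible a j S'" using S(1) unfolding feasible_def S'_def by auto
  hence "card S' \<le> rk a j" using rk_ge jS by blast
  thus ?thesis using ji aji cS' by (intro exI[of _ j]) auto
qed

lemma feasible_mono: "feasible a x S \<Longrightarrow> x \<le> n \<Longrightarrow> feasible a n S"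
  unfolding feasible_def by auto

lemma maxfeasD: "X \<in> maxfeas a n \<Longrightarrow> feasible a n X"
  "X \<in> maxfeas a n \<Longrightarrow> feasible a n Y \<Longrightarrow> card Y \<le> card X"
  unfolding maxfeas_def by auto

lemma maxfeas_rk: assumes X: "X \<in> maxfeas a n" and x: "x \<in> X"
  shows "rk a x = card {y\<in>X. y \<le> x}"
proof (rule antisym)
  have fX: "feasible a n X" using maxfeasD(1)[OF X] .
  have finX: "finite X" using feas_fin[OF fX] .
  have xn: "x \<le> n" using fX x unfolding feasible_def by auto
  obtain S where S: "feasible a x S" "x \<in> S" "card S = rk a x" using rk_ex by blast
  have sub: "S \<subseteq> {0..x}" using S by (auto simp: feasible_def)
  define T where "T = S \<union> {y\<in>X. x < y}"
  have ale: "s \<in> S \<Longrightarrow> a s \<le> a x" for s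
  proof -
    assume s: "s \<in> S"
    show ?thesis
    proof (cases "s = x")
      case False
      hence "s < x" using s sub by fastforce
      thus ?thesis using S s unfolding feasible_def by fastforce
    qed simp
  qed
  have "feasible a n T"
    unfolding feasible_def
  proof (intro conjI ballI impI)
    show "T \<subseteq> {0..n}" using sub xn fX unfolding T_def feasible_def by auto
  next
    fix p q assume pq: "p \<in> T" "q \<in> T" "p < q"
    show "a p < a q"
    proof (cases "q \<in> S")
      case True
      hence "q \<le> x" using sub by auto
      hence "p \<in> S" using pq unfolding T_def by auto
      thus ?thesis using True pq S(1) unfolding feasible_def by blast
    next
      case False
      hence q: "q \<in> X" "x < q" using pq unfolding T_def by auto
      show ?thesis
      proof (cases "p \<in> S")
        case True
        have "a x < a q" using q x fX unfolding feasible_def by blast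
        thus ?thesis using ale[OF True] by simp
      next
        case False
        hence "p \<in> X" using pq unfolding T_def by auto
        thus ?thesis using q pq fX unfolding feasible_def by blast
      qed
    qed
  qed
  hence "card T \<le> card X" using maxfeasD(2)[OF X] by blast
  moreover have "card T = card S + card {y\<in>X. x < y}"
    unfolding T_def using sub finX feas_fin[OF S(1)] by (subst card_Un_disjoint) auto
  moreover have "card X = card {y\<in>X. y \<le> x} + card {y\<in>X. x < y}"
  proof -
    have "X = {y\<in>X. y \<le> x} \<union> {y\<in>X. x < y}" by auto
    hence "card X = card ({y\<in>X. y \<le> x} \<union> {y\<in>X. x < y})" by simp
    also have "\<dots> = card {y\<in>X. y \<le> x} + card {y\<in>X. x < y}"
      using finX by (subst card_Un_disjoint) auto
    finally show ?thesis .
  qed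
  ultimately show "rk a x \<le> card {y\<in>X. y \<le> x}" using S by simp
next
  have fX: "feasible a n X" using maxfeasD(1)[OF X] .
  have "feasible a x {y\<in>X. y \<le> x}" using fX unfolding feasible_def by auto
  thus "card {y\<in>X. y \<le> x} \<le> rk a x" using rk_ge x by auto
qed

lemma exch_rk: assumes X: "X \<in> maxfeas a n" and Y: "Y \<in> maxfeas a n"
  and XY: "X - Y = {k}" and YX: "Y - X = {j}"
  shows "rk a k = rk a j"
proof -
  define C where "C = X \<inter> Y"
  have Xe: "X = insert k C" and Ye: "Y = insert j C" and kC: "k \<notin> C" and jC: "j \<notin> C"
    using XY YX unfolding C_def by blast+
  have finC: "finite C" using feas_fin[OF maxfeasD(1)[OF X]] unfolding C_def by auto
  have cardX: "card {y\<in>insert z C. y \<le> c} = card {y\<in>C. y \<le> c} + (if z \<le> c then 1 else 0)"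
    if "z \<notin> C" for z c
  proof (cases "z \<le> c")
    case True
    hence "{y\<in>insert z C. y \<le> c} = insert z {y\<in>C. y \<le> c}" by auto
    thus ?thesis using that finC True by simp
  next
    case False
    hence "{y\<in>insert z C. y \<le> c} = {y\<in>C. y \<le> c}" by auto
    thus ?thesis using False by simp
  qed
  have eqv: "(k \<le> c) = (j \<le> c)" if c: "c \<in> C" for c
  proof -
    have "rk a c = card {y\<in>X. y \<le> c}" using maxfeas_rk[OF X] c Xe by auto
    moreover have "rk a c = card {y\<in>Y. y \<le> c}" using maxfeas_rk[OF Y] c Ye by auto
    ultimately show ?thesis using cardX[OF kC, of c] cardX[OF jC, of c] Xe Ye
      by (auto split: if_splits)
  qed
  have "rk a k = card {y\<in>C. y \<le> k} + 1" using maxfeas_rk[OF X, of k] Xe cardX[OF kC, of k] by simp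
  moreover have "rk a j = card {y\<in>C. y \<le> j} + 1" using maxfeas_rk[OF Y, of j] Ye cardX[OF jC, of j] by simp
  moreover have "{y\<in>C. y \<le> k} = {y\<in>C. y \<le> j}"
  proof -
    have "y \<in> C \<Longrightarrow> (y \<le> k) = (y \<le> j)" for y
      using eqv[of y] kC jC by (metis le_antisym nat_le_linear)
    thus ?thesis by auto
  qed
  ultimately show ?thesis by simp
qed

lemma ps_ins_found: "p < length P \<Longrightarrow> a i < a (hd (P!p)) \<Longrightarrow> (\<forall>q<p. \<not> a i < a (hd (P!q)))
   \<Longrightarrow> ps_insert a i P = P[p := i # P!p]"
proof (induction P arbitrary: p)
  case (Cons x P)
  show ?case
  proof (cases p)
    case 0 thus ?thesis using Cons by simp
  next
    case (Suc p')
    have "\<not> a i < a (hd x)" using Cons.prems(3) Suc by auto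
    moreover have "ps_insert a i P = P[p' := i # P!p']"
      using Cons.prems Suc by (intro Cons.IH) auto
    ultimately show ?thesis using Suc by simp
  qed
qed simp

lemma ps_ins_none: "(\<forall>q<length P. \<not> a i < a (hd (P!q))) \<Longrightarrow> ps_insert a i P = P @ [[i]]"
proof (induction P)
  case (Cons x P)
  have "\<not> a i < a (hd x)" using Cons.prems by auto
  moreover have "ps_insert a i P = P @ [[i]]" using Cons.prems by (intro Cons.IH) auto
  ultimately show ?case by simp
qed simp

definition pinv :: "(nat \<Rightarrow> nat) \<Rightarrow> nat \<Rightarrow> nat list list \<Rightarrow> bool" where
  "pinv a m P \<longleftrightarrow> (\<forall>p<length P. P!p \<noteq> []) \<and>
     (\<forall>p<length P. \<forall>i\<in>set (P!p). rk a i = Suc p) \<and>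
     (\<forall>i<m. \<exists>p<length P. i \<in> set (P!p)) \<and>
     (\<forall>p<length P. \<forall>i\<in>set (P!p). a (hd (P!p)) \<le> a i) \<and>
     (\<forall>p q. p < q \<and> q < length P \<longrightarrow> a (hd (P!p)) < a (hd (P!q))) \<and>
     (\<forall>p<length P. \<forall>i\<in>set (P!p). i < m)"

lemma pinv_step:
  assumes inv: "pinv a m P" and mn: "m \<le> n"
    and inj: "\<And>x y. x \<le> n \<Longrightarrow> y \<le> n \<Longrightarrow> a x = a y \<Longrightarrow> x = y"
  shows "pinv a (Suc m) (ps_insert a m P)"
proof -
  note I = inv[unfolded pinv_def]
  have I1: "\<And>p. p < length P \<Longrightarrow> P!p \<noteq> []" using I[THEN conjunct1] by blast
  have I2: "\<And>p i. p < length P \<Longrightarrow> i \<in> set (P!p) \<Longrightarrow> rk a i = Suc p" using I[THEN conjunct2, THEN conjunct1] by blast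
  have I3: "\<And>i. i < m \<Longrightarrow> \<exists>p<length P. i \<in> set (P!p)" using I[THEN conjunct2, THEN conjunct2, THEN conjunct1] by blast
  have I4: "\<And>p i. p < length P \<Longrightarrow> i \<in> set (P!p) \<Longrightarrow> a (hd (P!p)) \<le> a i" using I[THEN conjunct2, THEN conjunct2, THEN conjunct2, THEN conjunct1] by blast
  have I5: "\<And>p q. p < q \<Longrightarrow> q < length P \<Longrightarrow> a (hd (P!p)) < a (hd (P!q))" using I[THEN conjunct2, THEN conjunct2, THEN conjunct2, THEN conjunct2, THEN conjunct1] by blast
  have I6: "\<And>p i. p < length P \<Longrightarrow> i \<in> set (P!p) \<Longrightarrow> i < m" using I[THEN conjunct2, THEN conjunct2, THEN conjunct2, THEN conjunct2, THEN conjunct2] by blast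
  have hdin: "\<And>p. p < length P \<Longrightarrow> hd (P!p) \<in> set (P!p)" using I1 by simp
  have tops_lt: "a (hd (P!q)) < a m" if "q < length P" "\<not> a m < a (hd (P!q))" for q
  proof -
    have "hd (P!q) < m" using I6 hdin that by blast
    hence "a (hd (P!q)) \<noteq> a m" using inj mn by (metis less_imp_le_nat less_le_trans nat_neq_iff)
    thus ?thesis using that by simp
  qed
  show ?thesis
  proof (cases "\<exists>q<length P. a m < a (hd (P!q))")
    case True
    define p where "p = (LEAST q. q < length P \<and> a m < a (hd (P!q)))"
    have p: "p < length P" "a m < a (hd (P!p))"
      using LeastI_ex[OF True] unfolding p_def by auto
    have pl: "\<And>q. q < p \<Longrightarrow> \<not> a m < a (hd (P!q))"
      using p(1) not_less_Least unfolding p_def by (metis order.strict_trans)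
    have eq: "ps_insert a m P = P[p := m # P!p]" using ps_ins_found p pl by blast
    have rkm: "rk a m = Suc p"
    proof (rule antisym)
      show "Suc p \<le> rk a m"
      proof (cases p)
        case 0 thus ?thesis using rk_pos by (simp add: Suc_le_eq)
      next
        case (Suc p')
        have "p' < length P" using p Suc by simp
        have lt: "a (hd (P!p')) < a m" using tops_lt pl Suc p by simp
        have "hd (P!p') < m" using I6 hdin \<open>p' < length P\<close> by blast
        hence "rk a (hd (P!p')) < rk a m" using rk_step lt by blast
        moreover have "rk a (hd (P!p')) = Suc p'" using I2 hdin \<open>p' < length P\<close> by blast
        ultimately show ?thesis using Suc by simp
      qed
    next
      show "rk a m \<le> Suc p"
      proof (rule ccontr)
        assume "\<not> rk a m \<le> Suc p"
        hence "2 \<le> rk a m" by simp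
        from rk_pred[OF this] obtain j where j: "j < m" "a j < a m" "rk a m \<le> Suc (rk a j)" by blast
        obtain q where q: "q < length P" "j \<in> set (P!q)" using I3 j(1) by blast
        have "rk a j = Suc q" using I2 q by blast
        hence "p \<le> q" using j(3) \<open>\<not> rk a m \<le> Suc p\<close> by simp
        hence "a (hd (P!p)) \<le> a (hd (P!q))" using I5 q(1) by (cases "p = q") (auto intro: less_imp_le)
        also have "\<dots> \<le> a j" using I4 q by blast
        finally show False using j(2) p(2) by simp
      qed
    qed
    show ?thesis unfolding eq pinv_def
    proof (intro conjI allI impI ballI)
      fix p' assume "p' < length (P[p := m # P ! p])"
      thus "P[p := m # P ! p] ! p' \<noteq> []" using I1 by (cases "p' = p") auto
    next
      fix p' i assume "p' < length (P[p := m # P ! p])" "i \<in> set (P[p := m # P ! p] ! p')"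
      thus "rk a i = Suc p'" using I2 rkm p by (cases "p' = p") auto
    next
      fix i assume "i < Suc m"
      thus "\<exists>p'<length (P[p := m # P ! p]). i \<in> set (P[p := m # P ! p] ! p')"
      proof (cases "i = m")
        case True thus ?thesis using p by (intro exI[of _ p]) auto
      next
        case False
        hence "i < m" using \<open>i < Suc m\<close> by simp
        then obtain q where q: "q < length P" "i \<in> set (P!q)" using I3 by blast
        thus ?thesis by (intro exI[of _ q]) (cases "q = p"; auto)
      qed
    next
      fix p' i assume a1: "p' < length (P[p := m # P ! p])" "i \<in> set (P[p := m # P ! p] ! p')"
      show "a (hd (P[p := m # P ! p] ! p')) \<le> a i"
      proof (cases "p' = p")
        case True
        thus ?thesis using a1 I4[of p] p by (auto, meson less_le_trans less_imp_le)
      next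
        case False thus ?thesis using a1 I4 by auto
      qed
    next
      fix p1 q assume a1: "p1 < q \<and> q < length (P[p := m # P ! p])"
      show "a (hd (P[p := m # P ! p] ! p1)) < a (hd (P[p := m # P ! p] ! q))"
      proof -
        have "q < length P" using a1 by simp
        consider "p1 = p" | "q = p" | "p1 \<noteq> p" "q \<noteq> p" by blast
        thus ?thesis
        proof cases
          case 1
          hence "a m < a (hd (P!q))" using p(2) I5[of p q] a1 by simp
          thus ?thesis using 1 a1 by simp
        next
          case 2
          hence "a (hd (P!p1)) < a m" using tops_lt pl a1 by simp
          thus ?thesis using 2 a1 by simp
        next
          case 3 thus ?thesis using I5 a1 by simp
        qed
      qed
    next
      fix p' i assume "p' < length (P[p := m # P ! p])" "i \<in> set (P[p := m # P ! p] ! p')"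
      thus "i < Suc m" using I6 by (cases "p' = p") (auto simp: less_SucI)
    qed
  next
    case False
    hence nl: "\<forall>q<length P. \<not> a m < a (hd (P!q))" by blast
    have eq: "ps_insert a m P = P @ [[m]]" using ps_ins_none nl by blast
    have rkm: "rk a m = Suc (length P)"
    proof (rule antisym)
      show "Suc (length P) \<le> rk a m"
      proof (cases "length P")
        case 0 thus ?thesis using rk_pos by (simp add: Suc_le_eq)
      next
        case (Suc p')
        have "p' < length P" using Suc by simp
        have lt: "a (hd (P!p')) < a m" using tops_lt nl \<open>p' < length P\<close> by simp
        have "hd (P!p') < m" using I6 hdin \<open>p' < length P\<close> by blast
        hence "rk a (hd (P!p')) < rk a m" using rk_step lt by blast
        moreover have "rk a (hd (P!p')) = Suc p'" using I2 hdin \<open>p' < length P\<close> by blast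
        ultimately show ?thesis using Suc by simp
      qed
    next
      show "rk a m \<le> Suc (length P)"
      proof (rule ccontr)
        assume "\<not> rk a m \<le> Suc (length P)"
        hence "2 \<le> rk a m" by simp
        from rk_pred[OF this] obtain j where j: "j < m" "a j < a m" "rk a m \<le> Suc (rk a j)" by blast
        obtain q where q: "q < length P" "j \<in> set (P!q)" using I3 j(1) by blast
        have "rk a j = Suc q" using I2 q by blast
        thus False using j(3) q(1) \<open>\<not> rk a m \<le> Suc (length P)\<close> by simp
      qed
    qed
    show ?thesis unfolding eq pinv_def
    proof (intro conjI allI impI ballI)
      fix p' assume "p' < length (P @ [[m]])"
      thus "(P @ [[m]]) ! p' \<noteq> []" using I1 by (auto simp: nth_append)
    next
      fix p' i assume "p' < length (P @ [[m]])" "i \<in> set ((P @ [[m]]) ! p')"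
      thus "rk a i = Suc p'" using I2 rkm by (auto simp: nth_append split: if_splits)
    next
      fix i assume "i < Suc m"
      thus "\<exists>p'<length (P @ [[m]]). i \<in> set ((P @ [[m]]) ! p')"
      proof (cases "i = m")
        case True thus ?thesis by (intro exI[of _ "length P"]) auto
      next
        case False
        hence "i < m" using \<open>i < Suc m\<close> by simp
        then obtain q where q: "q < length P" "i \<in> set (P!q)" using I3 by blast
        thus ?thesis by (intro exI[of _ q]) (auto simp: nth_append)
      qed
    next
      fix p' i assume "p' < length (P @ [[m]])" "i \<in> set ((P @ [[m]]) ! p')"
      thus "a (hd ((P @ [[m]]) ! p')) \<le> a i" using I4 by (auto simp: nth_append split: if_splits)
    next
      fix p1 q assume a1: "p1 < q \<and> q < length (P @ [[m]])"
      show "a (hd ((P @ [[m]]) ! p1)) < a (hd ((P @ [[m]]) ! q))"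
      proof (cases "q = length P")
        case True
        thus ?thesis using a1 tops_lt nl by (auto simp: nth_append)
      next
        case False thus ?thesis using a1 I5 by (auto simp: nth_append)
      qed
    next
      fix p' i assume "p' < length (P @ [[m]])" "i \<in> set ((P @ [[m]]) ! p')"
      thus "i < Suc m" using I6 by (auto simp: nth_append less_SucI split: if_splits)
    qed
  qed
qed

lemma pinv_all:
  assumes inj: "\<And>x y. x \<le> n \<Longrightarrow> y \<le> n \<Longrightarrow> a x = a y \<Longrightarrow> x = y"
  shows "m \<le> Suc n \<Longrightarrow> pinv a m (foldl (\<lambda>P i. ps_insert a i P) [] [0..<m])"
proof (induction m)
  case 0 thus ?case by (simp add: pinv_def)
next
  case (Suc m)
  hence "pinv a m (foldl (\<lambda>P i. ps_insert a i P) [] [0..<m])" "m \<le> n" by simp_all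
  thus ?case using pinv_step[OF _ _ inj, where m=m] by simp
qed

lemma placed_belowI:
  assumes inj: "\<And>x y. x \<le> n \<Longrightarrow> y \<le> n \<Longrightarrow> a x = a y \<Longrightarrow> x = y"
    and uv: "u < v" "v \<le> n" and r: "rk a u = rk a v" "2 \<le> rk a u"
  shows "placed_below a n u v"
proof -
  have inv: "pinv a (Suc n) (patience a n)"
    unfolding patience_def using pinv_all[OF inj, where m="Suc n"] by simp
  have I3: "\<And>i. i < Suc n \<Longrightarrow> \<exists>p<length (patience a n). i \<in> set (patience a n ! p)"
    using inv unfolding pinv_def by blast
  obtain p where p: "p < length (patience a n)" "u \<in> set (patience a n ! p)"
    using I3[of u] uv by auto
  obtain q where q: "q < length (patience a n)" "v \<in> set (patience a n ! q)"
    using I3[of v] uv by auto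
  have "rk a u = Suc p" "rk a v = Suc q" using inv p q unfolding pinv_def by blast+
  hence "p = q" "1 \<le> p" using r by auto
  thus ?thesis unfolding placed_below_def using p q uv by blast
qed

lemma tri_D: "tri a n X Y \<Longrightarrow> X \<in> maxfeas a n \<and> Y \<in> maxfeas a n \<and>
   (\<exists>u v. X - Y = {u} \<and> Y - X = {v} \<and> u < v)"
  unfolding tri_def placed_below_def by blast

lemma Mfam_trans: "K \<in> Mfam a n J \<Longrightarrow> J \<in> Mfam a n I \<Longrightarrow> K \<in> Mfam a n I"
  by (induction K rule: Mfam.induct) (auto intro: Mfam.step)

lemma Mfam_max: "K \<in> Mfam a n I \<Longrightarrow> I \<in> maxfeas a n \<Longrightarrow> K \<in> maxfeas a n"
  by (induction K rule: Mfam.induct) (auto simp: tri_def)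

lemma Mfam_first: "K \<in> Mfam a n I \<Longrightarrow> K = I \<or> (\<exists>J. tri a n J I \<and> K \<in> Mfam a n J)"
proof (induction K rule: Mfam.induct)
  case base thus ?case by simp
next
  case (step J J')
  thus ?case by (metis Mfam.base Mfam.step)
qed

lemma tri_sum: assumes "tri a n X Y" shows "\<Sum>X < \<Sum>Y"
proof -
  obtain u v where uv: "X - Y = {u}" "Y - X = {v}" "u < v" and XY: "X \<in> maxfeas a n" "Y \<in> maxfeas a n"
    using tri_D[OF assms] by blast
  have fX: "finite X" "finite Y" using XY feas_fin maxfeasD(1) by blast+
  define C where "C = X \<inter> Y"
  have "X = insert u C" "Y = insert v C" "u \<notin> C" "v \<notin> C" using uv unfolding C_def by blast+
  moreover have "finite C" using fX unfolding C_def by simp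
  ultimately show ?thesis using uv(3) by simp
qed

definition rstep :: "(nat \<Rightarrow> nat) \<Rightarrow> nat \<Rightarrow> nat set \<Rightarrow> nat set \<Rightarrow> bool" where
  "rstep a n X Y \<longleftrightarrow> feasible a n X \<and> feasible a n Y \<and>
     (\<exists>j k. j \<notin> X \<and> k \<in> X \<and> Y = (X \<union> {j}) - {k})"

lemma rstep_sym: "rstep a n X Y \<Longrightarrow> rstep a n Y X"
  unfolding rstep_def
proof (elim conjE exE, intro conjI)
  fix j k assume h: "j \<notin> X" "k \<in> X" "Y = X \<union> {j} - {k}"
  show "\<exists>j' k'. j' \<notin> Y \<and> k' \<in> Y \<and> X = Y \<union> {j'} - {k'}"
  proof -
    have "k \<notin> Y" "j \<in> Y" using h by blast+
    moreover have "X = Y \<union> {k} - {j}" using h by blast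
    ultimately show ?thesis by blast
  qed
qed

lemma rsteps_sym: "(rstep a n)\<^sup>*\<^sup>* X Y \<Longrightarrow> (rstep a n)\<^sup>*\<^sup>* Y X"
proof (induction rule: rtranclp_induct)
  case (step y z)
  thus ?case using rstep_sym by (metis converse_rtranclp_into_rtranclp)
qed simp

lemma reconf_iff: assumes fI: "feasible a n I"
  shows "reconf_seq a n I J \<longleftrightarrow> (rstep a n)\<^sup>*\<^sup>* I J"
proof
  assume "reconf_seq a n I J"
  then obtain L where L: "L \<noteq> []" "hd L = I" "last L = J" "\<forall>X\<in>set L. feasible a n X"
    "\<And>i. Suc i < length L \<Longrightarrow> \<exists>j k. j \<notin> L ! i \<and> k \<in> L ! i \<and> L ! Suc i = (L ! i \<union> {j}) - {k}"
    unfolding reconf_seq_def by blast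
  have "i < length L \<Longrightarrow> (rstep a n)\<^sup>*\<^sup>* I (L!i)" for i
  proof (induction i)
    case 0 thus ?case using L(1,2) by (simp add: hd_conv_nth)
  next
    case (Suc i)
    have "rstep a n (L!i) (L!Suc i)"
      unfolding rstep_def using L(4) L(5)[of i] Suc.prems by (auto simp: nth_mem)
    thus ?case using Suc by (meson Suc_lessD rtranclp.rtrancl_into_rtrancl)
  qed
  moreover have "length L - 1 < length L" using L(1) by simp
  ultimately show "(rstep a n)\<^sup>*\<^sup>* I J" using L(1,3) by (metis last_conv_nth)
next
  assume "(rstep a n)\<^sup>*\<^sup>* I J"
  thus "reconf_seq a n I J"
  proof (induction rule: rtranclp_induct)
    case base
    show ?case unfolding reconf_seq_def using fI by (intro exI[of _ "[I]"]) auto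
  next
    case (step Y Z)
    from step.IH obtain L where L: "L \<noteq> []" "hd L = I" "last L = Y" "\<forall>X\<in>set L. feasible a n X"
      "\<forall>i. Suc i < length L \<longrightarrow> (\<exists>j k. j \<notin> L ! i \<and> k \<in> L ! i \<and> L ! Suc i = (L ! i \<union> {j}) - {k})"
      unfolding reconf_seq_def by blast
    have st: "\<exists>j k. j \<notin> Y \<and> k \<in> Y \<and> Z = (Y \<union> {j}) - {k}" "feasible a n Z"
      using step.hyps(2) unfolding rstep_def by blast+
    show ?case unfolding reconf_seq_def
    proof (intro exI[of _ "L @ [Z]"] conjI allI impI)
      show "hd (L @ [Z]) = I" using L by simp
      show "\<forall>X\<in>set (L @ [Z]). feasible a n X" using L st by auto
      fix i assume i: "Suc i < length (L @ [Z])"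
      show "\<exists>j k. j \<notin> (L @ [Z]) ! i \<and> k \<in> (L @ [Z]) ! i \<and> (L @ [Z]) ! Suc i = ((L @ [Z]) ! i \<union> {j}) - {k}"
      proof (cases "Suc i < length L")
        case True thus ?thesis using L(5) by (simp add: nth_append)
      next
        case False
        hence "i = length L - 1" using i by simp
        hence "(L @ [Z]) ! i = Y" "(L @ [Z]) ! Suc i = Z" using L(1,3) by (auto simp: nth_append last_conv_nth)
        thus ?thesis using st by simp
      qed
    qed simp_all
  qed
qed




lemma diff_single: assumes "J - I = {u}" "I - J = {v}"
  shows "J = insert u (I - {v})" "u \<notin> I" "v \<in> I" "u \<in> J" "v \<notin> J"
proof -
  have e1: "\<And>x. (x \<in> J \<and> x \<notin> I) = (x = u)" using assms(1) by blast
  have e2: "\<And>x. (x \<in> I \<and> x \<notin> J) = (x = v)" using assms(2) by blast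
  show "J = insert u (I - {v})" using e1 e2 by blast
  show "u \<notin> I" "v \<in> I" "u \<in> J" "v \<notin> J" using e1 e2 by blast+
qed

context
  fixes a :: "nat \<Rightarrow> nat" and n :: nat
  assumes a0: "a 0 = 0" and arng: "a ` {1..n} \<subseteq> {1..n}" and ainj: "inj_on a {1..n}"
begin

lemma inj': "x \<le> n \<Longrightarrow> y \<le> n \<Longrightarrow> a x = a y \<Longrightarrow> x = y"
proof -
  assume h: "x \<le> n" "y \<le> n" "a x = a y"
  have pos: "1 \<le> z \<Longrightarrow> z \<le> n \<Longrightarrow> 1 \<le> a z" for z
  proof -
    assume "1 \<le> z" "z \<le> n"
    hence "a z \<in> {1..n}" using arng by (auto simp: image_subset_iff)
    thus ?thesis by simp
  qed
  show "x = y"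
  proof (cases "x = 0 \<or> y = 0")
    case True
    have "x = 0 \<Longrightarrow> y \<noteq> 0 \<Longrightarrow> False" using h pos[of y] a0 by simp
    moreover have "y = 0 \<Longrightarrow> x \<noteq> 0 \<Longrightarrow> False" using h pos[of x] a0 by simp
    ultimately show ?thesis using True by (cases "x = 0") auto
  next
    case False
    hence "x \<in> {1..n}" "y \<in> {1..n}" using h by auto
    thus ?thesis using inj_onD[OF ainj] h(3) by blast
  qed
qed

lemma rk2: "1 \<le> x \<Longrightarrow> x \<le> n \<Longrightarrow> 2 \<le> rk a x"
proof -
  assume x: "1 \<le> x" "x \<le> n"
  hence "a x \<in> {1..n}" using arng by (auto simp: image_subset_iff)
  hence "1 \<le> a x" by simp
  hence "rk a 0 < rk a x" using rk_step[of 0 x a] x a0 by simp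
  thus ?thesis using rk_pos[of a 0] by simp
qed

lemma same_rk_a: "u < v \<Longrightarrow> v \<le> n \<Longrightarrow> rk a u = rk a v \<Longrightarrow> a v < a u"
proof -
  assume h: "u < v" "v \<le> n" "rk a u = rk a v"
  have "a u \<noteq> a v" using inj'[of u v] h by auto
  moreover have "\<not> a u < a v" using rk_step[of u v a] h by auto
  ultimately show ?thesis by simp
qed

lemma tri_intro: assumes X: "X \<in> maxfeas a n" and Y: "Y \<in> maxfeas a n"
  and uv: "X - Y = {u}" "Y - X = {v}" "u < v"
  shows "tri a n X Y"
proof -
  have r: "rk a u = rk a v" using exch_rk[OF X Y uv(1,2)] .
  have "v \<in> Y" using uv by blast
  hence vn: "v \<le> n" using maxfeasD(1)[OF Y] unfolding feasible_def by auto
  have "2 \<le> rk a v" using rk2[OF _ vn] uv(3) by simp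
  hence "placed_below a n u v" using placed_belowI[OF inj' uv(3) vn] r by simp
  thus ?thesis unfolding tri_def using X Y uv by blast
qed

lemma exists_min: assumes I: "I \<in> maxfeas a n" shows "\<exists>K\<in>Mfam a n I. tri_minimal a n K"
proof -
  obtain K where K: "K \<in> Mfam a n I" "\<And>K'. K' \<in> Mfam a n I \<Longrightarrow> \<Sum>K \<le> \<Sum>K'"
  proof -
    have "I \<in> Mfam a n I" by (rule Mfam.base)
    from ex_has_least_nat[where P="\<lambda>K. K \<in> Mfam a n I", OF this, where m="\<lambda>K. \<Sum>K"]
    show ?thesis using that by blast
  qed
  have "tri_minimal a n K"
    unfolding tri_minimal_def
  proof
    show "K \<in> maxfeas a n" using Mfam_max K I by blast
    show "\<not> (\<exists>J\<in>maxfeas a n. tri a n J K)"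
    proof
      assume "\<exists>J\<in>maxfeas a n. tri a n J K"
      then obtain J where JK: "tri a n J K" by blast
      have "J \<in> Mfam a n I" "\<Sum>J < \<Sum>K" using Mfam.step[OF K(1) JK] tri_sum[OF JK] by auto
      moreover have "\<Sum>K \<le> \<Sum>J" using K(2) calculation(1) .
      ultimately show False by simp
    qed
  qed
  thus ?thesis using K by blast
qed


lemma key_order:
  assumes I: "I \<in> maxfeas a n" and J1: "J1 \<in> maxfeas a n" and J2: "J2 \<in> maxfeas a n"
    and r1: "J1 - I = {u1}" "I - J1 = {v1}"
    and r2: "J2 - I = {u2}" "I - J2 = {v2}" "u2 < v2"
    and ne: "v1 \<noteq> v2" and lt: "u1 < u2"
  shows "a u1 < a u2"
proof -
  have "v2 \<in> I - J2" using r2(2) by simp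
  hence "v2 \<in> I" by simp
  moreover have "v2 \<notin> I - J1" using r1(2) ne by simp
  ultimately have v2J1: "v2 \<in> J1" by simp
  have "u1 \<in> J1 - I" using r1(1) by simp
  hence u1J1: "u1 \<in> J1" "u1 \<notin> I" by simp_all
  have "u1 \<noteq> v2" using u1J1 \<open>v2 \<in> I\<close> by blast
  hence "u1 < v2" using lt r2(3) by linarith
  hence a1: "a u1 < a v2" using v2J1 u1J1 maxfeasD(1)[OF J1] unfolding feasible_def by blast
  have rk: "rk a u2 = rk a v2" using exch_rk[OF J2 I r2(1) r2(2)] .
  have "v2 \<le> n" using \<open>v2 \<in> I\<close> maxfeasD(1)[OF I] unfolding feasible_def by auto
  hence "a v2 < a u2" using same_rk_a[OF r2(3)] rk by blast
  thus ?thesis using a1 by simp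
qed

lemma conf: assumes t1: "tri a n J1 I" and t2: "tri a n J2 I"
  shows "\<exists>K. K \<in> Mfam a n J1 \<and> K \<in> Mfam a n J2"
proof -
  obtain u1 v1 where r1: "J1 - I = {u1}" "I - J1 = {v1}" "u1 < v1" and M1: "J1 \<in> maxfeas a n" "I \<in> maxfeas a n"
    using tri_D[OF t1] by blast
  obtain u2 v2 where r2: "J2 - I = {u2}" "I - J2 = {v2}" "u2 < v2" and M2: "J2 \<in> maxfeas a n"
    using tri_D[OF t2] by blast
  note J1e = diff_single[OF r1(1,2)]
  note J2e = diff_single[OF r2(1,2)]
  show ?thesis
  proof (cases "v1 = v2")
    case True
    consider "u1 = u2" | "u1 < u2" | "u2 < u1" by linarith
    thus ?thesis
    proof cases
      case 1
      hence "J1 = J2" using J1e(1) J2e(1) True by simp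
      thus ?thesis using Mfam.base by blast
    next
      case 2
      have "J1 - J2 = {u1}" "J2 - J1 = {u2}" unfolding J1e(1) J2e(1) using J1e(2) J2e(2) True 2 by auto
      hence "tri a n J1 J2" using tri_intro[OF M1(1) M2] 2 by blast
      thus ?thesis using Mfam.base Mfam.step by blast
    next
      case 3
      have "J2 - J1 = {u2}" "J1 - J2 = {u1}" unfolding J1e(1) J2e(1) using J1e(2) J2e(2) True 3 by auto
      hence "tri a n J2 J1" using tri_intro[OF M2 M1(1)] 3 by blast
      thus ?thesis using Mfam.base Mfam.step by blast
    qed
  next
    case False
    have fI: "feasible a n I" using maxfeasD(1)[OF M1(2)] .
    have rku: "rk a u1 = rk a v1" "rk a u2 = rk a v2"
      using exch_rk[OF M1(1) M1(2) r1(1) r1(2)] exch_rk[OF M2 M1(2) r2(1) r2(2)] by auto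
    have "rk a v1 \<noteq> rk a v2"
    proof
      assume eq: "rk a v1 = rk a v2"
      have "v1 < v2 \<or> v2 < v1" using False by linarith
      thus False
      proof
        assume "v1 < v2"
        hence "a v1 < a v2" using fI J1e(3) J2e(3) unfolding feasible_def by blast
        thus False using rk_step[OF \<open>v1 < v2\<close> \<open>a v1 < a v2\<close>] eq by simp
      next
        assume "v2 < v1"
        hence "a v2 < a v1" using fI J1e(3) J2e(3) unfolding feasible_def by blast
        thus False using rk_step[OF \<open>v2 < v1\<close> \<open>a v2 < a v1\<close>] eq by simp
      qed
    qed
    hence u12: "u1 \<noteq> u2" using rku by auto
    define K where "K = insert u1 (insert u2 (I - {v1} - {v2}))"
    have fJ1: "feasible a n J1" and fJ2: "feasible a n J2" using M1 M2 maxfeasD(1) by blast+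
    have fK: "feasible a n K"
      unfolding feasible_def
    proof (intro conjI ballI impI)
      show "K \<subseteq> {0..n}" using fI fJ1 fJ2 J1e(4) J2e(4) unfolding K_def feasible_def by auto
    next
      fix x y assume xy: "x \<in> K" "y \<in> K" "x < y"
      have "(x \<in> J1 \<and> y \<in> J1) \<or> (x \<in> J2 \<and> y \<in> J2) \<or> (x = u1 \<and> y = u2) \<or> (x = u2 \<and> y = u1)"
        using xy(1,2) unfolding K_def J1e(1) J2e(1) by auto
      thus "a x < a y"
      proof (elim disjE conjE)
        assume "x \<in> J1" "y \<in> J1" thus ?thesis using fJ1 xy(3) unfolding feasible_def by blast
      next
        assume "x \<in> J2" "y \<in> J2" thus ?thesis using fJ2 xy(3) unfolding feasible_def by blast
      next
        assume "x = u1" "y = u2"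
        thus ?thesis using key_order[OF M1(2) M1(1) M2 r1(1,2) r2 False] xy(3) by simp
      next
        assume "x = u2" "y = u1"
        thus ?thesis using key_order[OF M1(2) M2 M1(1) r2(1,2) r1] False xy(3) by simp
      qed
    qed
    have finI: "finite I" using feas_fin[OF fI] .
    have "{v1, v2} \<subseteq> I" using J1e(3) J2e(3) by auto
    hence "card {v1, v2} \<le> card I" using finI card_mono by blast
    hence c2: "2 \<le> card I" using False by simp
    have "card (I - {v1} - {v2}) = card I - 2" using J1e(3) J2e(3) False finI by simp
    moreover have "u2 \<notin> I - {v1} - {v2}" "u1 \<notin> insert u2 (I - {v1} - {v2})" using J1e(2) J2e(2) u12 by auto
    ultimately have "card K = card I" unfolding K_def using finI c2 by simp
    hence KM: "K \<in> maxfeas a n" using fK maxfeasD(2)[OF M1(2)] unfolding maxfeas_def by simp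
    have "K - J1 = {u2}" "J1 - K = {v2}" unfolding K_def J1e(1) using J1e(2,3) J2e(2,3) u12 False by auto
    hence t1': "tri a n K J1" using tri_intro[OF KM M1(1)] r2(3) by blast
    have "K - J2 = {u1}" "J2 - K = {v1}" unfolding K_def J2e(1) using J1e(2,3) J2e(2,3) u12 False by auto
    hence t2': "tri a n K J2" using tri_intro[OF KM M2] r1(3) by blast
    show ?thesis using Mfam.step[OF Mfam.base t1'] Mfam.step[OF Mfam.base t2'] by blast
  qed
qed

lemma uniq: "I \<in> maxfeas a n \<Longrightarrow> K1 \<in> Mfam a n I \<Longrightarrow> K2 \<in> Mfam a n I \<Longrightarrow>
   tri_minimal a n K1 \<Longrightarrow> tri_minimal a n K2 \<Longrightarrow> K1 = K2"
proof (induction I arbitrary: K1 K2 rule: measure_induct_rule[where f="\<lambda>I. \<Sum>I"])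
  case (less I)
  have nm: "\<not> tri a n J K" if "tri_minimal a n K" for J K
    using that tri_D unfolding tri_minimal_def by blast
  consider "K1 = I" | "K2 = I" | J1 J2 where "tri a n J1 I" "K1 \<in> Mfam a n J1" "tri a n J2 I" "K2 \<in> Mfam a n J2"
    using Mfam_first[OF less.prems(2)] Mfam_first[OF less.prems(3)] by blast
  thus ?case
  proof cases
    case 1
    thus ?thesis using Mfam_first[OF less.prems(3)] nm[OF less.prems(4)] by blast
  next
    case 2
    thus ?thesis using Mfam_first[OF less.prems(2)] nm[OF less.prems(5)] by blast
  next
    case 3
    obtain K where K: "K \<in> Mfam a n J1" "K \<in> Mfam a n J2" using conf[OF 3(1) 3(3)] by blast
    have J1M: "J1 \<in> maxfeas a n" and J2M: "J2 \<in> maxfeas a n" using 3 tri_D by blast+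
    have "K \<in> maxfeas a n" using Mfam_max[OF K(1) J1M] .
    then obtain K' where K': "K' \<in> Mfam a n K" "tri_minimal a n K'" using exists_min by blast
    have "K1 = K'" using less.IH[OF tri_sum[OF 3(1)] J1M 3(2) Mfam_trans[OF K'(1) K(1)] less.prems(4) K'(2)] .
    moreover have "K2 = K'" using less.IH[OF tri_sum[OF 3(3)] J2M 3(4) Mfam_trans[OF K'(1) K(2)] less.prems(5) K'(2)] .
    ultimately show ?thesis by simp
  qed
qed

lemma min_of_eq: "I \<in> maxfeas a n \<Longrightarrow> K \<in> Mfam a n I \<Longrightarrow> tri_minimal a n K \<Longrightarrow> min_of a n I = K"
  unfolding min_of_def by (rule the_equality) (blast, metis uniq)

lemma min_of_prop: "I \<in> maxfeas a n \<Longrightarrow> min_of a n I \<in> Mfam a n I \<and> tri_minimal a n (min_of a n I)"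
  using exists_min min_of_eq by metis

lemma min_of_tri: assumes t: "tri a n J' J" shows "min_of a n J' = min_of a n J"
proof -
  have M: "J' \<in> maxfeas a n" "J \<in> maxfeas a n" using tri_D[OF t] by blast+
  have "J' \<in> Mfam a n J" using Mfam.step[OF Mfam.base t] .
  hence "min_of a n J' \<in> Mfam a n J" using Mfam_trans min_of_prop[OF M(1)] by blast
  thus ?thesis using min_of_eq[OF M(2)] min_of_prop[OF M(1)] by metis
qed

lemma Mfam_rsteps: "K \<in> Mfam a n I \<Longrightarrow> (rstep a n)\<^sup>*\<^sup>* K I"
proof (induction K rule: Mfam.induct)
  case base thus ?case by simp
next
  case (step J J')
  obtain u v where uv: "J' - J = {u}" "J - J' = {v}" and M: "J' \<in> maxfeas a n" "J \<in> maxfeas a n"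
    using tri_D[OF step.hyps(2)] by blast
  have "rstep a n J' J" unfolding rstep_def
  proof (intro conjI)
    show "feasible a n J'" "feasible a n J" using M maxfeasD(1) by blast+
    have "v \<notin> J'" "u \<in> J'" using diff_single[OF uv(2,1)] by blast+
    moreover have "J = J' \<union> {v} - {u}" using diff_single[OF uv(2,1)] by auto
    ultimately show "\<exists>j k. j \<notin> J' \<and> k \<in> J' \<and> J = J' \<union> {j} - {k}" by blast
  qed
  thus ?case using step.IH by (rule converse_rtranclp_into_rtranclp)
qed

lemma main: assumes I: "I \<in> maxfeas a n" and J: "J \<in> maxfeas a n"
  shows "reconf_seq a n I J \<longleftrightarrow> tri_equiv a n I J"
proof
  assume "reconf_seq a n I J"
  hence st: "(rstep a n)\<^sup>*\<^sup>* I J" using reconf_iff[OF maxfeasD(1)[OF I]] by simp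
  have inv: "Y \<in> maxfeas a n \<and> min_of a n Y = min_of a n I" if "(rstep a n)\<^sup>*\<^sup>* I Y" for Y
    using that
  proof (induction rule: rtranclp_induct)
    case base thus ?case using I by simp
  next
    case (step Y Z)
    have YM: "Y \<in> maxfeas a n" using step.IH by blast
    obtain j k where jk: "j \<notin> Y" "k \<in> Y" "Z = (Y \<union> {j}) - {k}" and fZ: "feasible a n Z"
      using step.hyps(2) unfolding rstep_def by blast
    have finY: "finite Y" using feas_fin maxfeasD(1)[OF YM] by blast
    have "card Z = card Y" unfolding jk(3) using jk(1,2) finY by (simp add: card_insert_if)
    hence ZM: "Z \<in> maxfeas a n" using fZ maxfeasD(2)[OF YM] unfolding maxfeas_def by simp
    have d: "Y - Z = {k}" "Z - Y = {j}" unfolding jk(3) using jk(1,2) by auto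
    have "j \<noteq> k" using jk(1,2) by auto
    hence "k < j \<or> j < k" by linarith
    hence "min_of a n Y = min_of a n Z"
    proof
      assume "k < j"
      hence "tri a n Y Z" using tri_intro[OF YM ZM d] by blast
      thus ?thesis by (rule min_of_tri)
    next
      assume "j < k"
      hence "tri a n Z Y" using tri_intro[OF ZM YM d(2) d(1)] by blast
      thus ?thesis using min_of_tri by simp
    qed
    thus ?case using ZM step.IH by simp
  qed
  have "min_of a n J = min_of a n I" using inv[OF st] by simp
  thus "tri_equiv a n I J" unfolding tri_equiv_def by simp
next
  assume "tri_equiv a n I J"
  hence eq: "min_of a n I = min_of a n J" unfolding tri_equiv_def .
  have "(rstep a n)\<^sup>*\<^sup>* (min_of a n I) I" using Mfam_rsteps[OF conjunct1[OF min_of_prop[OF I]]] .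
  hence s1: "(rstep a n)\<^sup>*\<^sup>* I (min_of a n I)" by (rule rsteps_sym)
  have "(rstep a n)\<^sup>*\<^sup>* (min_of a n J) J" using Mfam_rsteps[OF conjunct1[OF min_of_prop[OF J]]] .
  hence "(rstep a n)\<^sup>*\<^sup>* (min_of a n I) J" using eq by simp
  hence "(rstep a n)\<^sup>*\<^sup>* I J" using s1 by (rule rtranclp_trans[rotated])
  thus "reconf_seq a n I J" using reconf_iff[OF maxfeasD(1)[OF I]] by simp
qed

end

theorem lemma3:
  fixes a :: "nat \<Rightarrow> nat" and n :: nat and I J :: "nat set"
  assumes "a 0 = 0"
    and "a ` {1..n} \<subseteq> {1..n}"
    and "inj_on a {1..n}"
    and "I \<in> maxfeas a n"
    and "J \<in> maxfeas a n"
  shows "reconf_seq a n I J \<longleftrightarrow> tri_equiv a n I J"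
  by (rule main[OF assms])

end
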